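(* Let $\mathcal H$ and $\mathcal H_\varepsilon$ be separable Hilbert spaces, $\mathfrak a$ and $\mathfrak a_\varepsilon$ closed densely defined non-negative sesquilinear forms in $\mathcal H$ and $\mathcal H_\varepsilon$, and $\mathcal A$, $\mathcal A_\varepsilon$ the non-negative self-adjoint operators associated with them. Let $J_\varepsilon:\mathcal H\to\mathcal H_\varepsilon$ and $\check J_\varepsilon:\mathcal H_\varepsilon\to\mathcal H$ be bounded linear operators and $\delta_\varepsilon,\check\delta_\varepsilon,\nu_\varepsilon,\check\nu_\varepsilon\ge0$ constants such that $$\|(\mathcal A_\varepsilon+\mathrm I)^{-1}J_\varepsilon-J_\varepsilon(\mathcal A+\mathrm I)^{-1}\|_{\mathcal H\to\mathcal H_\varepsilon}\le\delta_\varepsilon,\qquad \|\check J_\varepsilon(\mathcal A_\varepsilon+\mathrm I)^{-1}-(\mathcal A+\mathrm I)^{-1}\check J_\varepsilon\|_{\mathcal H_\varepsilon\to\mathcal H}\le\check\delta_\varepsilon,$$ $$\|f\|^2_{\mathcal H}\le\|J_\varepsilon f\|^2_{\mathcal H_\varepsilon}+\nu_\varepsilon\mathfrak a[f,f]\ \ \forall f\in\mathrm{dom}(\mathfrak a),\qquad \|u\|^2_{\mathcal H_\varepsilon}\le\|\check J_\varepsilon u\|^2_{\mathcal H}+\check\nu_\varepsilon\mathfrak a_\varepsilon[u,u]\ \ \forall u\in\mathrm{dom}(\mathfrak a_\varepsilon).$$ Then for any $d\in(0,1)$ such that $\nu_\varepsilon,\check\nu_\varepsilon\in[0,\frac d{1-d})$,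 $$\mathrm{dist}_{\rm out}\Big(\sigma((\mathcal A_\varepsilon+\mathrm I)^{-1})\cap[d,1],\ \sigma((\mathcal A+\mathrm I)^{-1})\Big)\le\frac{\check\delta_\varepsilon}{\sqrt{1-\check\nu_\varepsilon(d^{-1}-1)}},$$ $$\mathrm{dist}_{\rm out}\Big(\sigma((\mathcal A+\mathrm I)^{-1})\cap[d,1],\ \sigma((\mathcal A_\varepsilon+\mathrm I)^{-1})\Big)\le\frac{\delta_\varepsilon}{\sqrt{1-\nu_\varepsilon(d^{-1}-1)}}.$$
   Context: The subscript $\varepsilon$ is merely a label (the spaces and operators need not depend on any parameter). For compact sets $X,Y\subset\mathbb R$, $\mathrm{dist}_{\rm out}(X,Y)=\sup_{x\in X}\inf_{y\in Y}|x-y|$ (with the supremum over the empty set taken as $0$). *)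

theory Defs
  imports "HOL-Analysis.Analysis"
begin

text \<open>HOL-Analysis only provides real inner product
spaces; a complex Hilbert space is a real Hilbert space (real_inner + complete)
equipped with a complex scalar multiplication and a complex inner product
(linear in the first argument) whose real part is the real inner product.\<close>

class complex_hilbert = real_inner + complete_space +
  fixes scaleC :: "complex \<Rightarrow> 'a \<Rightarrow> 'a"
    and cinner :: "'a \<Rightarrow> 'a \<Rightarrow> complex"
  assumes scaleC_add_right: "scaleC c (x + y) = scaleC c x + scaleC c y"
    and scaleC_add_left: "scaleC (b + c) x = scaleC b x + scaleC c x"
    and scaleC_scaleC: "scaleC b (scaleC c x) = scaleC (b * c) x"
    and scaleC_one: "scaleC 1 x = x"
    and scaleC_of_real: "scaleC (complex_of_real r) x = scaleR r x"
    and cinner_add_left: "cinner (x + y) z = cinner x z + cinner y z"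
    and cinner_scaleC_left: "cinner (scaleC c x) y = c * cinner x y"
    and cinner_commute: "cinner y x = cnj (cinner x y)"
    and Re_cinner: "Re (cinner x y) = inner x y"

definition separable_space :: "'a::complex_hilbert itself \<Rightarrow> bool" where
  "separable_space _ \<longleftrightarrow> (\<exists>S::'a set. countable S \<and> closure S = UNIV)"

definition cbounded_linear :: "('a::complex_hilbert \<Rightarrow> 'b::complex_hilbert) \<Rightarrow> bool" where
  "cbounded_linear T \<longleftrightarrow> bounded_linear T \<and> (\<forall>c x. T (scaleC c x) = scaleC c (T x))"

definition csubspace :: "'a::complex_hilbert set \<Rightarrow> bool" where
  "csubspace D \<longleftrightarrow> 0 \<in> D \<and> (\<forall>x\<in>D. \<forall>y\<in>D. x + y \<in> D) \<and> (\<forall>c. \<forall>x\<in>D. scaleC c x \<in> D)"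

definition sesq_form :: "'a::complex_hilbert set \<Rightarrow> ('a \<Rightarrow> 'a \<Rightarrow> complex) \<Rightarrow> bool" where
  "sesq_form D a \<longleftrightarrow> csubspace D \<and>
     (\<forall>u\<in>D. \<forall>v\<in>D. \<forall>w\<in>D. a (u + v) w = a u w + a v w \<and> a w (u + v) = a w u + a w v) \<and>
     (\<forall>c. \<forall>u\<in>D. \<forall>v\<in>D. a (scaleC c u) v = c * a u v \<and> a u (scaleC c v) = cnj c * a u v)"

definition closed_dd_nonneg_form :: "'a::complex_hilbert set \<Rightarrow> ('a \<Rightarrow> 'a \<Rightarrow> complex) \<Rightarrow> bool" where
  "closed_dd_nonneg_form D a \<longleftrightarrow> sesq_form D a \<and> closure D = UNIV \<and>
     (\<forall>u\<in>D. Im (a u u) = 0 \<and> Re (a u u) \<ge> 0) \<and>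
     (\<forall>s u. (\<forall>n. s n \<in> D) \<and> s \<longlonglongrightarrow> u \<and>
        (\<forall>e>0. \<exists>N. \<forall>m\<ge>N. \<forall>n\<ge>N. Re (a (s m - s n) (s m - s n)) < e)
        \<longrightarrow> u \<in> D \<and> (\<lambda>n. Re (a (s n - u) (s n - u))) \<longlonglongrightarrow> 0)"

text \<open>Graph of the operator associated with the form (Kato's first representation
theorem): u \<in> dom A iff u \<in> dom a and there is w with a[u,v] = (w,v) for all v in dom a;
then A u = w.\<close>
definition form_op :: "'a::complex_hilbert set \<Rightarrow> ('a \<Rightarrow> 'a \<Rightarrow> complex) \<Rightarrow> ('a \<times> 'a) set" where
  "form_op D a = {(u, w). u \<in> D \<and> (\<forall>v\<in>D. a u v = cinner w v)}"

text \<open>The resolvent (A + I)^{-1}: f \<mapsto> the u \<in> dom A with A u + u = f.\<close>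
definition form_resolvent :: "'a::complex_hilbert set \<Rightarrow> ('a \<Rightarrow> 'a \<Rightarrow> complex) \<Rightarrow> 'a \<Rightarrow> 'a" where
  "form_resolvent D a f = (THE u. (u, f - u) \<in> form_op D a)"

definition cspectrum :: "('a::complex_hilbert \<Rightarrow> 'a) \<Rightarrow> complex set" where
  "cspectrum T = {z. \<not> bij (\<lambda>x. T x - scaleC z x)}"

definition real_spectrum :: "('a::complex_hilbert \<Rightarrow> 'a) \<Rightarrow> real set" where
  "real_spectrum T = {x. complex_of_real x \<in> cspectrum T}"

text \<open>dist_out(X,Y) = sup_{x\<in>X} inf_{y\<in>Y} |x-y|, valued in [0,\<infinity>]; sup over {} is 0.\<close>
definition dist_out :: "real set \<Rightarrow> real set \<Rightarrow> ennreal" where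
  "dist_out X Y = (SUP x\<in>X. INF y\<in>Y. ennreal \<bar>x - y\<bar>)"

end

theory Submission
  imports Defs
begin


lemma quad_CS:
  fixes A B C :: real
  assumes "\<And>t. 0 \<le> A + 2*t*B + t^2*C" "0 \<le> A" "0 \<le> C"
  shows "B^2 \<le> A*C"
proof (cases "C = 0")
  case True
  have "B = 0"
  proof (rule ccontr)
    assume "B \<noteq> 0"
    have "0 \<le> A + 2*(-(A+1)/(2*B))*B + (-(A+1)/(2*B))^2*C" by (rule assms(1))
    also have "\<dots> = -1" using \<open>B \<noteq> 0\<close> True by (simp add: field_simps)
    finally show False by simp
  qed
  then show ?thesis using True by simp
next
  case False
  have C0: "0 \<le> C" by (rule assms(3))
  hence Cp: "C > 0" using False by simp
  have "0 \<le> A + 2*(-B/C)*B + (-B/C)^2*C" by (rule assms(1))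
  also have "\<dots> = A - B^2/C" using Cp by (simp add: field_simps power2_eq_square)
  finally have "B^2/C \<le> A" by simp
  thus ?thesis using Cp by (simp add: field_simps)
qed



locale rbform =
  fixes D :: "'a::real_vector set" and b :: "'a \<Rightarrow> 'a \<Rightarrow> real"
  assumes sub: "subspace D"
    and add_left: "\<And>x y z. x \<in> D \<Longrightarrow> y \<in> D \<Longrightarrow> z \<in> D \<Longrightarrow> b (x + y) z = b x z + b y z"
    and scale_left: "\<And>c x z. x \<in> D \<Longrightarrow> z \<in> D \<Longrightarrow> b (c *\<^sub>R x) z = c * b x z"
    and symm: "\<And>x y. x \<in> D \<Longrightarrow> y \<in> D \<Longrightarrow> b x y = b y x"
    and pos: "\<And>x. x \<in> D \<Longrightarrow> 0 \<le> b x x"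
begin

lemma D0: "0 \<in> D" using sub by (simp add: subspace_0)
lemma Dadd: "x \<in> D \<Longrightarrow> y \<in> D \<Longrightarrow> x + y \<in> D" using sub by (simp add: subspace_add)
lemma Dscale: "x \<in> D \<Longrightarrow> c *\<^sub>R x \<in> D" using sub by (simp add: subspace_scale)
lemma Ddiff: "x \<in> D \<Longrightarrow> y \<in> D \<Longrightarrow> x - y \<in> D" using sub by (simp add: subspace_diff)
lemma Dneg: "x \<in> D \<Longrightarrow> - x \<in> D" using sub by (simp add: subspace_neg)

lemma add_right: "x \<in> D \<Longrightarrow> y \<in> D \<Longrightarrow> z \<in> D \<Longrightarrow> b z (x + y) = b z x + b z y"
  using symm add_left Dadd by metis
lemma scale_right: "x \<in> D \<Longrightarrow> z \<in> D \<Longrightarrow> b z (c *\<^sub>R x) = c * b z x"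
  using symm scale_left Dscale by metis
lemma neg_left: "x \<in> D \<Longrightarrow> z \<in> D \<Longrightarrow> b (- x) z = - b x z"
  using scale_left[of x z "-1"] by simp
lemma neg_right: "x \<in> D \<Longrightarrow> z \<in> D \<Longrightarrow> b z (- x) = - b z x"
  using neg_left symm Dneg by metis
lemma diff_left: "x \<in> D \<Longrightarrow> y \<in> D \<Longrightarrow> z \<in> D \<Longrightarrow> b (x - y) z = b x z - b y z"
  using add_left[of x "-y" z] neg_left[of y z] Dneg by simp
lemma diff_right: "x \<in> D \<Longrightarrow> y \<in> D \<Longrightarrow> z \<in> D \<Longrightarrow> b z (x - y) = b z x - b z y"
  using symm diff_left Ddiff by metis

lemma expand: assumes "x \<in> D" "y \<in> D" shows
   "b (x + t *\<^sub>R y) (x + t *\<^sub>R y) = b x x + 2*t*b x y + t^2 * b y y"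
proof -
  have ty: "t *\<^sub>R y \<in> D" using assms Dscale by blast
  have "b (x + t *\<^sub>R y) (x + t *\<^sub>R y) = b x (x + t *\<^sub>R y) + b (t *\<^sub>R y) (x + t *\<^sub>R y)"
    using assms ty Dadd add_left by blast
  also have "\<dots> = b x x + b x (t *\<^sub>R y) + (b (t *\<^sub>R y) x + b (t *\<^sub>R y) (t *\<^sub>R y))"
    using assms ty add_right by simp
  also have "\<dots> = b x x + t * b x y + (t * b y x + t * (t * b y y))"
    using assms ty by (simp add: scale_left scale_right)
  finally show ?thesis using symm[OF assms] by (simp add: power2_eq_square algebra_simps)
qed

lemma CS: assumes "x \<in> D" "y \<in> D" shows "(b x y)^2 \<le> b x x * b y y"
proof (rule quad_CS)
  fix t show "0 \<le> b x x + 2*t*b x y + t^2 * b y y"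
    using pos[of "x + t *\<^sub>R y"] expand[OF assms] Dadd Dscale assms by simp
qed (simp_all add: pos assms)

lemma CS_abs: assumes "x \<in> D" "y \<in> D" shows "\<bar>b x y\<bar> \<le> sqrt (b x x) * sqrt (b y y)"
proof -
  have "\<bar>b x y\<bar> = sqrt ((b x y)^2)" by simp
  also have "\<dots> \<le> sqrt (b x x * b y y)" using CS[OF assms] real_sqrt_le_mono by blast
  also have "\<dots> = sqrt (b x x) * sqrt (b y y)" by (simp add: real_sqrt_mult)
  finally show ?thesis .
qed

lemma riesz:
  fixes l :: "'a \<Rightarrow> real" and C :: real
  assumes l_add: "\<And>x y. x \<in> D \<Longrightarrow> y \<in> D \<Longrightarrow> l (x + y) = l x + l y"
    and l_scale: "\<And>c x. x \<in> D \<Longrightarrow> l (c *\<^sub>R x) = c * l x"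
    and l_bd: "\<And>x. x \<in> D \<Longrightarrow> \<bar>l x\<bar> \<le> C * sqrt (b x x)"
    and compl: "\<And>s. (\<forall>n. s n \<in> D) \<Longrightarrow>
         (\<forall>e>0. \<exists>N. \<forall>m\<ge>N. \<forall>n\<ge>N. b (s m - s n) (s m - s n) < e) \<Longrightarrow>
         \<exists>u\<in>D. (\<lambda>n. b (s n - u) (s n - u)) \<longlonglongrightarrow> 0"
  shows "\<exists>u\<in>D. \<forall>v\<in>D. b u v = l v"
proof -
  define Cq where "Cq = \<bar>C\<bar>"
  have Cq0: "Cq \<ge> 0" by (simp add: Cq_def)
  have lbd: "\<bar>l x\<bar> \<le> Cq * sqrt (b x x)" if "x \<in> D" for x
  proof -
    have "C * sqrt (b x x) \<le> Cq * sqrt (b x x)" unfolding Cq_def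
      using pos[OF that] by (intro mult_right_mono) auto
    thus ?thesis using l_bd[OF that] by linarith
  qed
  define \<Phi> where "\<Phi> x = b x x - 2 * l x" for x
  have Phi_lb: "\<Phi> x \<ge> - (Cq^2)" if "x \<in> D" for x
  proof -
    define z where "z = sqrt (b x x)"
    have bz: "b x x = z^2" unfolding z_def using pos[OF that] by simp
    have "l x \<le> Cq * z" using lbd[OF that] unfolding z_def by linarith
    hence "\<Phi> x \<ge> z^2 - 2*Cq*z" unfolding \<Phi>_def bz by linarith
    moreover have "z^2 - 2*Cq*z \<ge> - (Cq^2)" using sum_power2_ge_zero[of "z - Cq" 0]
      by (simp add: power2_eq_square algebra_simps)
    ultimately show ?thesis by linarith
  qed
  define m where "m = Inf (\<Phi> ` D)"
  have bdd: "bdd_below (\<Phi> ` D)" using Phi_lb by (auto intro!: bdd_belowI[where m="- (Cq^2)"])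
  have ne: "\<Phi> ` D \<noteq> {}" using D0 by auto
  have m_le: "m \<le> \<Phi> x" if "x \<in> D" for x
    unfolding m_def using bdd that by (simp add: cInf_lower)
  have "\<exists>x\<in>D. \<Phi> x < m + 1 / (real n + 1)" for n
  proof -
    have "Inf (\<Phi> ` D) < m + 1 / (real n + 1)" unfolding m_def by simp
    then obtain y where "y \<in> \<Phi> ` D" "y < m + 1 / (real n + 1)"
      using cInf_lessD[OF ne] by blast
    thus ?thesis by auto
  qed
  then obtain s where sD: "\<And>n. s n \<in> D" and sm: "\<And>n. \<Phi> (s n) < m + 1 / (real n + 1)"
    by metis
  have para: "\<Phi> x + \<Phi> y = 2 * \<Phi> ((1/2) *\<^sub>R (x + y)) + (1/2) * b (x - y) (x - y)"
    if "x \<in> D" "y \<in> D" for x y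
  proof -
    have "b ((1/2) *\<^sub>R (x + y)) ((1/2) *\<^sub>R (x + y)) = (1/4) * (b x x + 2 * b x y + b y y)"
      using that Dadd Dscale by (simp add: scale_left scale_right add_left add_right symm[of y x]; simp add: field_simps)
    moreover have "b (x - y) (x - y) = b x x - 2 * b x y + b y y"
      using that Ddiff by (simp add: diff_left diff_right symm[of y x])
    moreover have "l ((1/2) *\<^sub>R (x + y)) = (1/2) * (l x + l y)"
      using that Dadd by (simp add: l_scale l_add)
    ultimately show ?thesis unfolding \<Phi>_def by (simp add: algebra_simps)
  qed
  have cauchy_b: "b (s i - s j) (s i - s j) < 2 / (real i + 1) + 2 / (real j + 1)" for i j
  proof -
    have "\<Phi> (s i) + \<Phi> (s j) = 2 * \<Phi> ((1/2) *\<^sub>R (s i + s j)) + (1/2) * b (s i - s j) (s i - s j)"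
      using para sD by blast
    moreover have "m \<le> \<Phi> ((1/2) *\<^sub>R (s i + s j))" using m_le Dscale Dadd sD by blast
    ultimately show ?thesis using sm[of i] sm[of j] by linarith
  qed
  have "\<forall>e>0. \<exists>N. \<forall>i\<ge>N. \<forall>j\<ge>N. b (s i - s j) (s i - s j) < e"
  proof (intro allI impI)
    fix e :: real assume e: "e > 0"
    obtain N :: nat where N: "4 / e < real N" using reals_Archimedean2 by blast
    have "4 / (real N + 1) < e" using N e by (simp add: field_simps)
    show "\<exists>N. \<forall>i\<ge>N. \<forall>j\<ge>N. b (s i - s j) (s i - s j) < e"
    proof (intro exI allI impI)
      fix i j assume ij: "N \<le> i" "N \<le> j"
      have "2 / (real i + 1) \<le> 2 / (real N + 1)" using ij by (simp add: frac_le)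
      moreover have "2 / (real j + 1) \<le> 2 / (real N + 1)" using ij by (simp add: frac_le)
      ultimately show "b (s i - s j) (s i - s j) < e"
        using cauchy_b[of i j] \<open>4 / (real N + 1) < e\<close> by simp
    qed
  qed
  then obtain u where uD: "u \<in> D" and lim: "(\<lambda>n. b (s n - u) (s n - u)) \<longlonglongrightarrow> 0"
    using compl sD by blast
  define A where "A = \<bar>m\<bar> + 1"
  define M where "M = 2 * Cq + A"
  have sbd: "sqrt (b (s n) (s n)) \<le> M" for n
  proof -
    define z where "z = sqrt (b (s n) (s n))"
    have z0: "z \<ge> 0" unfolding z_def using pos[OF sD[of n]] by simp
    have bz: "b (s n) (s n) = z^2" unfolding z_def using pos[OF sD[of n]] by simp
    have "l (s n) \<le> Cq * z" using lbd[OF sD[of n]] unfolding z_def by linarith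
    moreover have "\<Phi> (s n) < m + 1"
    proof -
      have "1 / (real n + 1) \<le> 1" by simp
      thus ?thesis using sm[of n] by linarith
    qed
    ultimately have q: "z^2 \<le> 2 * Cq * z + A" unfolding \<Phi>_def bz A_def by linarith
    show ?thesis
    proof (cases "z \<le> 1")
      case True thus ?thesis unfolding M_def A_def z_def[symmetric] using Cq0 by linarith
    next
      case False
      have A0: "A \<ge> 0" unfolding A_def by simp
      have "A \<le> A * z" using False A0 by (simp add: mult_le_cancel_left1)
      hence "z * z \<le> (2 * Cq + A) * z" using q by (simp add: power2_eq_square algebra_simps)
      hence "z \<le> 2 * Cq + A" using False by simp
      thus ?thesis unfolding M_def z_def .
    qed
  qed
  have Phi_u: "\<Phi> u \<le> m"
  proof (rule tendsto_le[OF _ _ tendsto_const])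
    define h where "h n = sqrt (b (s n - u) (s n - u))" for n
    have h: "h \<longlonglongrightarrow> 0" unfolding h_def using tendsto_real_sqrt[OF lim] by simp
    show "(\<lambda>n. m + 1 / (real n + 1) + 2 * M * h n + (h n)^2 + 2 * Cq * h n) \<longlonglongrightarrow> m"
    proof -
      have "(\<lambda>n. 1 / (real n + 1)) \<longlonglongrightarrow> 0" using LIMSEQ_inverse_real_of_nat
        by (simp add: inverse_eq_divide add.commute)
      hence "(\<lambda>n. m + 1 / (real n + 1) + 2 * M * h n + (h n)^2 + 2 * Cq * h n) \<longlonglongrightarrow> m + 0 + 2 * M * 0 + 0^2 + 2 * Cq * 0"
        by (intro tendsto_intros h)
      thus ?thesis by simp
    qed
    show "\<forall>\<^sub>F n in sequentially. \<Phi> u \<le> m + 1 / (real n + 1) + 2 * M * h n + (h n)^2 + 2 * Cq * h n"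
    proof (rule always_eventually, rule allI)
      fix n
      define k where "k = u - s n"
      have kD: "k \<in> D" unfolding k_def using uD sD Ddiff by blast
      have bk: "b k k = b (s n - u) (s n - u)"
      proof -
        have "s n - u = - k" unfolding k_def by simp
        thus ?thesis using kD Dneg[OF kD] by (simp add: neg_left neg_right)
      qed
      have hk: "h n = sqrt (b k k)" unfolding h_def bk ..
      have uk: "u = s n + k" unfolding k_def by simp
      have "\<Phi> u = \<Phi> (s n) + 2 * b (s n) k + b k k - 2 * l k"
        unfolding uk \<Phi>_def using expand[OF sD[of n] kD, of 1] l_add[OF sD[of n] kD] by simp
      also have "\<dots> \<le> \<Phi> (s n) + 2 * (M * h n) + (h n)^2 + 2 * (Cq * h n)"
      proof -
        have "b (s n) k \<le> sqrt (b (s n) (s n)) * sqrt (b k k)"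
          using CS_abs[OF sD[of n] kD] by linarith
        also have "\<dots> \<le> M * h n" unfolding hk using pos[OF kD] by (intro mult_right_mono sbd) auto
        finally have 1: "b (s n) k \<le> M * h n" .
        have 2: "- l k \<le> Cq * h n" using lbd[OF kD] unfolding hk by linarith
        have 3: "b k k = (h n)^2" using hk pos[OF kD] by simp
        show ?thesis using 1 2 3 by linarith
      qed
      finally show "\<Phi> u \<le> m + 1 / (real n + 1) + 2 * M * h n + (h n)^2 + 2 * Cq * h n"
        using sm[of n] by linarith
    qed
  qed simp
  show ?thesis
  proof (intro bexI[OF _ uD] ballI)
    fix v assume vD: "v \<in> D"
    define c where "c = b u v - l v"
    define \<beta> where "\<beta> = b v v"
    have \<beta>0: "\<beta> \<ge> 0" unfolding \<beta>_def using pos[OF vD] .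
    have var: "0 \<le> 2 * t * c + t^2 * \<beta>" for t
    proof -
      have "\<Phi> (u + t *\<^sub>R v) = \<Phi> u + 2 * t * c + t^2 * \<beta>"
        unfolding \<Phi>_def c_def \<beta>_def using expand[OF uD vD, of t] uD vD
        by (simp add: l_add l_scale Dscale algebra_simps)
      moreover have "m \<le> \<Phi> (u + t *\<^sub>R v)" using m_le Dadd Dscale uD vD by blast
      ultimately show ?thesis using Phi_u by linarith
    qed
    show "b u v = l v"
    proof (rule ccontr)
      assume "b u v \<noteq> l v"
      hence c0: "c \<noteq> 0" unfolding c_def by simp
      have "\<beta> + 1 \<noteq> 0" using \<beta>0 by simp
      have "0 \<le> 2 * (-c/(\<beta>+1)) * c + (-c/(\<beta>+1))^2 * \<beta>" by (rule var)
      also have "\<dots> < 0"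
      proof -
        define p where "p = \<beta> + 1"
        have p: "p > 0" using \<beta>0 unfolding p_def by simp
        have "2 * (-c/p) * c + (-c/p)^2 * \<beta> = - (c^2 * (2*p - \<beta>)) / p^2"
          using p by (simp add: field_simps power2_eq_square)
        also have "\<dots> < 0" using p \<beta>0 c0 unfolding p_def by (intro divide_neg_pos) auto
        finally show ?thesis unfolding p_def .
      qed
      finally show False by simp
    qed
  qed
qed

end



lemma hellinger_toeplitz:
  fixes T :: "'a::{real_inner,complete_space} \<Rightarrow> 'a"
  assumes lin: "linear T" and sym: "\<And>x y. inner (T x) y = inner x (T y)"
  shows "\<exists>K. \<forall>y. norm (T y) \<le> K * norm y"
proof -
  define F where "F n = {y. norm (T y) \<le> real n}" for n :: nat
  have Feq: "F n = (\<Inter>x. {y. \<bar>inner y (T x)\<bar> \<le> real n * norm x})" for n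
  proof (intro set_eqI iffI)
    fix y assume "y \<in> F n"
    hence ny: "norm (T y) \<le> real n" unfolding F_def by simp
    show "y \<in> (\<Inter>x. {y. \<bar>inner y (T x)\<bar> \<le> real n * norm x})"
    proof (intro InterI, clarsimp)
      fix x
      have "\<bar>inner y (T x)\<bar> = \<bar>inner (T y) x\<bar>" by (simp add: sym)
      also have "\<dots> \<le> norm (T y) * norm x" by (rule Cauchy_Schwarz_ineq2)
      also have "\<dots> \<le> real n * norm x" using ny by (simp add: mult_right_mono)
      finally show "\<bar>inner y (T x)\<bar> \<le> real n * norm x" .
    qed
  next
    fix y assume "y \<in> (\<Inter>x. {y. \<bar>inner y (T x)\<bar> \<le> real n * norm x})"
    hence h: "\<bar>inner y (T (T y))\<bar> \<le> real n * norm (T y)" by blast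
    have "(norm (T y))^2 = inner (T y) (T y)" by (simp add: power2_norm_eq_inner)
    also have "\<dots> = inner y (T (T y))" by (simp add: sym)
    also have "\<dots> \<le> real n * norm (T y)" using h by linarith
    finally have "norm (T y) * norm (T y) \<le> real n * norm (T y)" by (simp add: power2_eq_square)
    hence "norm (T y) \<le> real n"
      by (cases "norm (T y) = 0") (auto simp: mult_le_cancel_right)
    thus "y \<in> F n" unfolding F_def by simp
  qed
  have closedF: "closed (F n)" for n
    unfolding Feq
    by (intro closed_INT ballI closed_Collect_le continuous_intros)
  have unionF: "\<Union>(range F) = UNIV"
  proof (intro set_eqI iffI)
    fix y :: 'a
    obtain n :: nat where "norm (T y) \<le> real n" using real_arch_simple by blast
    thus "y \<in> \<Union>(range F)" unfolding F_def by blast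
  qed simp
  have "\<exists>n. interior (F n) \<noteq> {}"
  proof (rule ccontr)
    assume "\<not> (\<exists>n. interior (F n) \<noteq> {})"
    hence "euclidean interior_of \<Union>(range F) = {}"
      by (intro Baire_category_alt) (auto simp: completely_metrizable_space_euclidean closedF
          closed_closedin[symmetric])
    thus False using unionF by simp
  qed
  then obtain n y0 where "y0 \<in> interior (F n)" by blast
  then obtain e where e: "e > 0" and ball: "ball y0 e \<subseteq> F n"
    using open_contains_ball open_interior interior_subset by (metis subset_trans)
  have small: "norm (T z) \<le> 2 * real n" if "norm z < e" for z
  proof -
    have "y0 + z \<in> F n" using ball that by (auto simp: dist_norm)
    moreover have "y0 \<in> F n" using ball e by auto
    ultimately have "norm (T (y0 + z)) \<le> real n" "norm (T y0) \<le> real n" unfolding F_def by auto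
    moreover have "T z = T (y0 + z) - T y0" using lin by (simp add: linear_add)
    ultimately show ?thesis using norm_triangle_ineq4[of "T (y0 + z)" "T y0"] by simp
  qed
  show ?thesis
  proof (intro exI allI)
    fix y
    show "norm (T y) \<le> (4 * real n / e) * norm y"
    proof (cases "y = 0")
      case True thus ?thesis using lin by (simp add: linear_0)
    next
      case False
      define c where "c = e / (2 * norm y)"
      have c0: "c > 0" unfolding c_def using e False by simp
      have "norm (c *\<^sub>R y) < e" unfolding c_def using e False by simp
      hence "norm (T (c *\<^sub>R y)) \<le> 2 * real n" by (rule small)
      hence "c * norm (T y) \<le> 2 * real n" using lin c0 by (simp add: linear_scale)
      hence "norm (T y) \<le> 2 * real n / c" using c0 by (simp add: field_simps)
      also have "2 * real n / c = (4 * real n / e) * norm y" unfolding c_def using e False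
        by (simp add: field_simps)
      finally show ?thesis .
    qed
  qed
qed



lemma inner_form_rbform:
  fixes S :: "'a::real_inner \<Rightarrow> 'a"
  assumes "linear S"
  shows "rbform UNIV (\<lambda>x z. inner (S x) (S z))"
  using assms by unfold_locales (auto simp: linear_add linear_scale inner_commute inner_add_left inner_add_right)

lemma pos_form_rbform:
  fixes Q :: "'a::real_inner \<Rightarrow> 'a"
  assumes "linear Q" and sym: "\<And>x y. inner (Q x) y = inner x (Q y)" and pos: "\<And>x. 0 \<le> inner (Q x) x"
  shows "rbform UNIV (\<lambda>x z. inner (Q x) z)"
proof unfold_locales
  show "inner (Q (x + y)) z = inner (Q x) z + inner (Q y) z" for x y z
    using assms(1) by (simp add: linear_add inner_add_left)
  show "inner (Q (c *\<^sub>R x)) z = c * inner (Q x) z" for c x z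
    using assms(1) by (simp add: linear_scale)
  show "inner (Q x) y = inner (Q y) x" for x y
    using sym[of x y] by (simp add: inner_commute)
  show "0 \<le> inner (Q x) x" for x by (rule pos)
qed (simp add: subspace_UNIV)

lemma approx_eigen:
  fixes R :: "'a::{real_inner,complete_space} \<Rightarrow> 'a"
  assumes bl: "bounded_linear R" and sym: "\<And>x y. inner (R x) y = inner x (R y)"
    and nb: "\<not> bij (\<lambda>x. R x - \<mu> *\<^sub>R x)" and e: "e > 0"
  shows "\<exists>x. norm x = 1 \<and> norm (R x - \<mu> *\<^sub>R x) < e"
proof (rule ccontr)
  assume contra: "\<not> ?thesis"
  define S where "S x = R x - \<mu> *\<^sub>R x" for x
  have Sbl: "bounded_linear S" unfolding S_def
    by (intro bounded_linear_sub bl bounded_linear_scaleR_right bounded_linear_ident)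
  hence Slin: "linear S" by (rule bounded_linear.linear)
  have Ssym: "inner (S x) y = inner x (S y)" for x y
    unfolding S_def by (simp add: inner_diff_left inner_diff_right sym)
  have lower: "e * norm x \<le> norm (S x)" for x
  proof (cases "x = 0")
    case True thus ?thesis using Slin by (simp add: linear_0)
  next
    case False
    have "norm ((1 / norm x) *\<^sub>R x) = 1" using False by simp
    hence "\<not> norm (R ((1 / norm x) *\<^sub>R x) - \<mu> *\<^sub>R ((1 / norm x) *\<^sub>R x)) < e" using contra by blast
    hence "e \<le> norm (S ((1 / norm x) *\<^sub>R x))" unfolding S_def by simp
    also have "\<dots> = norm (S x) / norm x" using Slin by (simp add: linear_scale)
    finally show ?thesis using False by (simp add: field_simps)
  qed
  have inj: "inj S"
  proof (rule injI)
    fix x y assume "S x = S y"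
    hence "S (x - y) = 0" using Slin by (simp add: linear_diff)
    hence "e * norm (x - y) \<le> 0" using lower[of "x - y"] by simp
    thus "x = y" using e by (simp add: mult_le_0_iff)
  qed
  have surj: "surj S"
    unfolding surj_def
  proof (intro allI)
    fix y
    interpret B: rbform UNIV "\<lambda>x z. inner (S x) (S z)" by (rule inner_form_rbform[OF Slin])
    have "\<exists>u\<in>UNIV. \<forall>v\<in>UNIV. inner (S u) (S v) = inner y (S v)"
    proof (rule B.riesz[where C = "norm y"])
      show "inner y (S (x + z)) = inner y (S x) + inner y (S z)" for x z
        using Slin by (simp add: linear_add inner_add_right)
      show "inner y (S (c *\<^sub>R x)) = c * inner y (S x)" for c x
        using Slin by (simp add: linear_scale)
      show "\<bar>inner y (S x)\<bar> \<le> norm y * sqrt (inner (S x) (S x))" for x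
        using Cauchy_Schwarz_ineq2[of y "S x"] by (simp add: norm_eq_sqrt_inner)
    next
      fix s :: "nat \<Rightarrow> 'a"
      assume bc: "\<forall>e>0. \<exists>N. \<forall>m\<ge>N. \<forall>n\<ge>N. inner (S (s m - s n)) (S (s m - s n)) < e"
      have "Cauchy s"
      proof (rule CauchyI)
        fix r :: real assume r: "r > 0"
        obtain N where N: "\<forall>m\<ge>N. \<forall>n\<ge>N. inner (S (s m - s n)) (S (s m - s n)) < (e * r)^2"
          using bc e r by (meson zero_less_power mult_pos_pos)
        show "\<exists>N. \<forall>m\<ge>N. \<forall>n\<ge>N. norm (s m - s n) < r"
        proof (intro exI allI impI)
          fix m n assume "N \<le> m" "N \<le> n"
          hence "(norm (S (s m - s n)))^2 < (e * r)^2" using N by (simp add: power2_norm_eq_inner)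
          hence "norm (S (s m - s n)) < e * r" using e r by (simp add: power_less_imp_less_base)
          hence "e * norm (s m - s n) < e * r" using lower[of "s m - s n"] by linarith
          thus "norm (s m - s n) < r" using e by simp
        qed
      qed
      then obtain u where u: "s \<longlonglongrightarrow> u" using Cauchy_convergent_iff convergent_def by blast
      have "(\<lambda>n. S (s n - u)) \<longlonglongrightarrow> S (u - u)"
        by (intro bounded_linear.tendsto[OF Sbl] tendsto_intros u)
      hence lim0: "(\<lambda>n. S (s n - u)) \<longlonglongrightarrow> 0" using Slin by (simp add: linear_0)
      have "(\<lambda>n. (norm (S (s n - u)))^2) \<longlonglongrightarrow> (norm (0::'a))^2"
        by (intro tendsto_intros lim0)
      hence "(\<lambda>n. inner (S (s n - u)) (S (s n - u))) \<longlonglongrightarrow> 0"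
        by (simp add: power2_norm_eq_inner)
      thus "\<exists>u\<in>UNIV. (\<lambda>n. inner (S (s n - u)) (S (s n - u))) \<longlonglongrightarrow> 0" by auto
    qed
    then obtain u where hu: "\<And>v. inner (S u) (S v) = inner y (S v)" by blast
    have "inner (S (S u - y)) v = 0" for v
      using hu[of v] by (simp add: Ssym inner_diff_left)
    hence "S (S u - y) = 0" using inner_eq_zero_iff by blast
    hence "e * norm (S u - y) \<le> 0" using lower[of "S u - y"] by simp
    hence "S u = y" using e by (simp add: mult_le_0_iff)
    thus "\<exists>u. y = S u" by metis
  qed
  have "bij S" using inj surj by (rule bijI)
  thus False using nb unfolding S_def by simp
qed



lemma linear_inv_bij:
  fixes Q :: "'a::real_vector \<Rightarrow> 'a"
  assumes "linear Q" "bij Q"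
  shows "linear (inv Q)"
proof (rule linearI)
  have sj: "surj Q" and ij: "inj Q" using assms(2) by (auto simp: bij_def)
  fix x y :: 'a and c :: real
  have "Q (inv Q x + inv Q y) = x + y" using assms(1) sj by (simp add: linear_add surj_f_inv_f)
  thus "inv Q (x + y) = inv Q x + inv Q y" using ij by (metis inv_f_f)
  have "Q (c *\<^sub>R inv Q x) = c *\<^sub>R x" using assms(1) sj by (simp add: linear_scale surj_f_inv_f)
  thus "inv Q (c *\<^sub>R x) = c *\<^sub>R inv Q x" using ij by (metis inv_f_f)
qed

lemma bij_bounded_below:
  fixes Q :: "'a::{real_inner,complete_space} \<Rightarrow> 'a"
  assumes lin: "linear Q" and bij: "bij Q" and sym: "\<And>x y. inner (Q x) y = inner x (Q y)"
  shows "\<exists>K\<ge>0. \<forall>y. norm y \<le> K * norm (Q y)"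
proof -
  have sj: "surj Q" and ij: "inj Q" using bij by (auto simp: bij_def)
  have linT: "linear (inv Q)" by (rule linear_inv_bij[OF lin bij])
  have symT: "inner (inv Q x) y = inner x (inv Q y)" for x y
  proof -
    have "inner (inv Q x) y = inner (inv Q x) (Q (inv Q y))" using sj by (simp add: surj_f_inv_f)
    also have "\<dots> = inner (Q (inv Q x)) (inv Q y)" by (simp add: sym)
    also have "\<dots> = inner x (inv Q y)" using sj by (simp add: surj_f_inv_f)
    finally show ?thesis .
  qed
  obtain K where K: "\<And>y. norm (inv Q y) \<le> K * norm y"
    using hellinger_toeplitz[OF linT symT] by blast
  show ?thesis
  proof (intro exI[of _ "max K 0"] conjI allI)
    fix y
    have "norm y = norm (inv Q (Q y))" using ij by simp
    also have "\<dots> \<le> K * norm (Q y)" by (rule K)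
    also have "\<dots> \<le> max K 0 * norm (Q y)" by (intro mult_right_mono) auto
    finally show "norm y \<le> max K 0 * norm (Q y)" .
  qed simp
qed

lemma spec_near:
  fixes R :: "'a::{real_inner,complete_space} \<Rightarrow> 'a"
  assumes bl: "bounded_linear R" and sym: "\<And>x y. inner (R x) y = inner x (R y)"
    and x0: "x \<noteq> 0"
  shows "\<exists>\<mu>. \<not> bij (\<lambda>y. R y - \<mu> *\<^sub>R y) \<and> \<bar>lam - \<mu>\<bar> \<le> norm (R x - lam *\<^sub>R x) / norm x"
proof -
  define S where "S y = R y - lam *\<^sub>R y" for y
  have Sbl: "bounded_linear S" unfolding S_def
    by (intro bounded_linear_sub bl bounded_linear_scaleR_right bounded_linear_ident)
  hence Slin: "linear S" by (rule bounded_linear.linear)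
  have Ssym: "inner (S x) y = inner x (S y)" for x y
    unfolding S_def by (simp add: inner_diff_left inner_diff_right sym)
  define U where "U = {y::'a. norm y = 1}"
  define m2 where "m2 = Inf ((\<lambda>y. (norm (S y))^2) ` U)"
  define x1 where "x1 = (1 / norm x) *\<^sub>R x"
  have x1U: "x1 \<in> U" unfolding U_def x1_def using x0 by simp
  have ne: "(\<lambda>y. (norm (S y))^2) ` U \<noteq> {}" using x1U by blast
  have bdd: "bdd_below ((\<lambda>y. (norm (S y))^2) ` U)" by (rule bdd_belowI[where m = 0]) auto
  have m2_0: "m2 \<ge> 0" unfolding m2_def using ne by (intro cInf_greatest) auto
  have m2_le: "m2 \<le> (norm (S y))^2" if "y \<in> U" for y
    unfolding m2_def using bdd that by (intro cInf_lower) auto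
  have Sx1: "norm (S x1) = norm (S x) / norm x" unfolding x1_def using Slin by (simp add: linear_scale)
  define r where "r = sqrt m2"
  have r0: "r \<ge> 0" unfolding r_def using m2_0 by simp
  have r2: "r^2 = m2" unfolding r_def using m2_0 by simp
  have r_le: "r \<le> norm (S x) / norm x"
  proof -
    have "r \<le> sqrt ((norm (S x1))^2)" unfolding r_def using m2_le[OF x1U] by (rule real_sqrt_le_mono)
    thus ?thesis using Sx1 by simp
  qed
  have posQ: "m2 * (norm y)^2 \<le> (norm (S y))^2" for y
  proof (cases "y = 0")
    case True thus ?thesis by simp
  next
    case False
    have "(1 / norm y) *\<^sub>R y \<in> U" unfolding U_def using False by simp
    hence "m2 \<le> (norm (S ((1 / norm y) *\<^sub>R y)))^2" by (rule m2_le)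
    also have "\<dots> = (norm (S y))^2 / (norm y)^2" using Slin by (simp add: linear_scale power_divide)
    finally show ?thesis using False by (simp add: field_simps)
  qed
  have claim: "\<not> bij (\<lambda>y. S y - r *\<^sub>R y) \<or> \<not> bij (\<lambda>y. S y + r *\<^sub>R y)"
  proof (rule ccontr)
    assume "\<not> ?thesis"
    hence b1: "bij (\<lambda>y. S y - r *\<^sub>R y)" and b2: "bij (\<lambda>y. S y + r *\<^sub>R y)" by auto
    define Q where "Q y = S (S y) - m2 *\<^sub>R y" for y
    have Qeq: "Q = (\<lambda>y. S y - r *\<^sub>R y) \<circ> (\<lambda>y. S y + r *\<^sub>R y)"
    proof
      fix y
      show "Q y = ((\<lambda>y. S y - r *\<^sub>R y) \<circ> (\<lambda>y. S y + r *\<^sub>R y)) y"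
        unfolding Q_def using Slin r2
        by (simp add: linear_add linear_scale algebra_simps power2_eq_square)
    qed
    have bQ: "bij Q" unfolding Qeq using b1 b2 by (rule bij_comp[rotated])
    have Qbl: "bounded_linear Q" unfolding Q_def
      by (intro bounded_linear_sub bounded_linear_compose[OF Sbl Sbl] bounded_linear_scaleR_right bounded_linear_ident)
    hence Qlin: "linear Q" by (rule bounded_linear.linear)
    have Qsym: "inner (Q x) y = inner x (Q y)" for x y
      unfolding Q_def by (simp add: inner_diff_left inner_diff_right Ssym)
    have Qpos: "0 \<le> inner (Q y) y" for y
    proof -
      have "inner (Q y) y = (norm (S y))^2 - m2 * (norm y)^2"
        unfolding Q_def by (simp add: inner_diff_left Ssym power2_norm_eq_inner)
      thus ?thesis using posQ[of y] by simp
    qed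
    obtain K where K0: "K \<ge> 0" and K: "\<And>y. norm y \<le> K * norm (Q y)"
      using bij_bounded_below[OF Qlin bQ Qsym] by blast
    obtain L0 where L0: "\<And>y. norm (Q y) \<le> norm y * L0"
      using bounded_linear.bounded[OF Qbl] by blast
    define L where "L = max L0 0"
    have L0': "L \<ge> 0" unfolding L_def by simp
    have L: "norm (Q y) \<le> L * norm y" for y
    proof -
      have "norm (Q y) \<le> norm y * L0" by (rule L0)
      also have "\<dots> \<le> norm y * L" unfolding L_def by (intro mult_left_mono) auto
      finally show ?thesis by (simp add: mult.commute)
    qed
    interpret B: rbform UNIV "\<lambda>x z. inner (Q x) z" by (rule pos_form_rbform[OF Qlin Qsym Qpos])
    have QCS: "(norm (Q y))^2 \<le> L * inner (Q y) y" for y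
    proof (cases "Q y = 0")
      case True thus ?thesis using L0' Qpos[of y] by simp
    next
      case False
      have "((norm (Q y))^2)^2 = (inner (Q y) (Q y))^2" by (simp add: power2_norm_eq_inner)
      also have "\<dots> \<le> inner (Q y) y * inner (Q (Q y)) (Q y)"
        using B.CS[of y "Q y"] by simp
      also have "inner (Q (Q y)) (Q y) \<le> L * (norm (Q y))^2"
      proof -
        have "inner (Q (Q y)) (Q y) \<le> norm (Q (Q y)) * norm (Q y)" by (rule Cauchy_Schwarz_ineq2[THEN order_trans[OF abs_ge_self]])
        also have "\<dots> \<le> (L * norm (Q y)) * norm (Q y)" by (intro mult_right_mono L) auto
        finally show ?thesis by (simp add: power2_eq_square mult.assoc)
      qed
      hence "inner (Q y) y * inner (Q (Q y)) (Q y) \<le> inner (Q y) y * (L * (norm (Q y))^2)"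
        using Qpos[of y] by (intro mult_left_mono) auto
      finally have "((norm (Q y))^2) * (norm (Q y))^2 \<le> (L * inner (Q y) y) * (norm (Q y))^2"
        by (simp add: power2_eq_square algebra_simps)
      moreover have "(norm (Q y))^2 > 0" using False by simp
      ultimately show ?thesis by (rule mult_right_le_imp_le)
    qed
    define \<epsilon> where "\<epsilon> = 1 / (K^2 * L + 1)"
    have KL0: "K^2 * L \<ge> 0" using L0' by simp
    have \<epsilon>0: "\<epsilon> > 0" unfolding \<epsilon>_def using KL0 by simp
    have "m2 < m2 + \<epsilon>" using \<epsilon>0 by simp
    then obtain y where yU: "y \<in> U" and ysmall: "(norm (S y))^2 < m2 + \<epsilon>"
      unfolding m2_def using cInf_lessD[OF ne] by force
    have ny: "norm y = 1" using yU unfolding U_def by simp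
    have "inner (Q y) y = (norm (S y))^2 - m2 * (norm y)^2"
      unfolding Q_def by (simp add: inner_diff_left Ssym power2_norm_eq_inner)
    hence iQ: "inner (Q y) y < \<epsilon>" using ysmall ny by simp
    have "1 = (norm y)^2" using ny by simp
    also have "\<dots> \<le> (K * norm (Q y))^2" using K[of y] by (intro power_mono) auto
    also have "\<dots> = K^2 * (norm (Q y))^2" by (simp add: power_mult_distrib)
    also have "\<dots> \<le> K^2 * (L * inner (Q y) y)" by (intro mult_left_mono QCS) auto
    also have "\<dots> \<le> K^2 * (L * \<epsilon>)" using iQ L0' by (intro mult_left_mono) auto
    also have "\<dots> = K^2 * L / (K^2 * L + 1)" unfolding \<epsilon>_def by simp
    also have "\<dots> < 1" using KL0 by simp
    finally show False by simp
  qed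
  show ?thesis
  proof (cases "bij (\<lambda>y. S y - r *\<^sub>R y)")
    case False
    have "(\<lambda>y. S y - r *\<^sub>R y) = (\<lambda>y. R y - (lam + r) *\<^sub>R y)"
      unfolding S_def by (simp add: algebra_simps)
    hence "\<not> bij (\<lambda>y. R y - (lam + r) *\<^sub>R y)" using False by simp
    moreover have "\<bar>lam - (lam + r)\<bar> \<le> norm (R x - lam *\<^sub>R x) / norm x"
      using r0 r_le unfolding S_def by simp
    ultimately show ?thesis by blast
  next
    case True
    hence False': "\<not> bij (\<lambda>y. S y + r *\<^sub>R y)" using claim by simp
    have "(\<lambda>y. S y + r *\<^sub>R y) = (\<lambda>y. R y - (lam - r) *\<^sub>R y)"
      unfolding S_def by (simp add: algebra_simps)
    hence "\<not> bij (\<lambda>y. R y - (lam - r) *\<^sub>R y)" using False' by simp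
    moreover have "\<bar>lam - (lam - r)\<bar> \<le> norm (R x - lam *\<^sub>R x) / norm x"
      using r0 r_le unfolding S_def by simp
    ultimately show ?thesis by blast
  qed
qed



lemma scaleC_real: "scaleC (complex_of_real r) x = r *\<^sub>R x"
  by (rule scaleC_of_real)

lemma Im_cinner: "Im (cinner w v) = inner w (scaleC \<i> v)"
proof -
  have "inner w (scaleC \<i> v) = Re (cinner w (scaleC \<i> v))" by (simp add: Re_cinner)
  also have "\<dots> = Re (cnj (cinner (scaleC \<i> v) w))" by (simp add: cinner_commute[of w])
  also have "\<dots> = Re (\<i> * cinner v w)" by (simp add: cinner_scaleC_left)
  also have "\<dots> = - Im (cinner v w)" by simp
  also have "\<dots> = Im (cinner w v)" by (simp add: cinner_commute[of v w])
  finally show ?thesis by simp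
qed

context
  fixes D :: "'a::complex_hilbert set" and a :: "'a \<Rightarrow> 'a \<Rightarrow> complex"
  assumes F: "closed_dd_nonneg_form D a"
begin

lemma sesq: "sesq_form D a" using F by (simp add: closed_dd_nonneg_form_def)
lemma csub: "csubspace D" using sesq by (simp add: sesq_form_def)
lemma cD0: "0 \<in> D" using csub by (simp add: csubspace_def)
lemma cDadd: "x \<in> D \<Longrightarrow> y \<in> D \<Longrightarrow> x + y \<in> D" using csub by (simp add: csubspace_def)
lemma cDscale: "x \<in> D \<Longrightarrow> scaleC c x \<in> D" using csub by (simp add: csubspace_def)
lemma a_add_left: "u \<in> D \<Longrightarrow> v \<in> D \<Longrightarrow> w \<in> D \<Longrightarrow> a (u + v) w = a u w + a v w"
  using sesq by (simp add: sesq_form_def)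
lemma a_add_right: "u \<in> D \<Longrightarrow> v \<in> D \<Longrightarrow> w \<in> D \<Longrightarrow> a w (u + v) = a w u + a w v"
  using sesq by (simp add: sesq_form_def)
lemma a_scale_left: "u \<in> D \<Longrightarrow> v \<in> D \<Longrightarrow> a (scaleC c u) v = c * a u v"
  using sesq by (simp add: sesq_form_def)
lemma a_scale_right: "u \<in> D \<Longrightarrow> v \<in> D \<Longrightarrow> a u (scaleC c v) = cnj c * a u v"
  using sesq by (simp add: sesq_form_def)
lemma a_nonneg: "u \<in> D \<Longrightarrow> Im (a u u) = 0 \<and> Re (a u u) \<ge> 0"
  using F by (simp add: closed_dd_nonneg_form_def)
lemma a_closed: "(\<forall>n. s n \<in> D) \<Longrightarrow> s \<longlonglongrightarrow> u \<Longrightarrow>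
        (\<forall>e>0. \<exists>N. \<forall>m\<ge>N. \<forall>n\<ge>N. Re (a (s m - s n) (s m - s n)) < e)
        \<Longrightarrow> u \<in> D \<and> (\<lambda>n. Re (a (s n - u) (s n - u))) \<longlonglongrightarrow> 0"
  using F unfolding closed_dd_nonneg_form_def by blast

lemma rsub: "subspace D"
  unfolding subspace_def using cD0 cDadd cDscale[where c = "complex_of_real _"]
  by (auto simp: scaleC_real)

lemma a_herm_re: assumes "x \<in> D" "y \<in> D" shows "Re (a x y) = Re (a y x)"
proof -
  have exp: "a (x + z) (x + z) = a x x + a x z + a z x + a z z" if "z \<in> D" for z
    using assms that cDadd by (simp add: a_add_left a_add_right)
  have "Im (a (x + y) (x + y)) = 0" using a_nonneg cDadd assms by blast
  hence 1: "Im (a x y) + Im (a y x) = 0" using exp[OF assms(2)] a_nonneg assms by simp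
  have iy: "scaleC \<i> y \<in> D" using cDscale assms by blast
  have "Im (a (x + scaleC \<i> y) (x + scaleC \<i> y)) = 0" using a_nonneg cDadd assms iy by blast
  hence 2: "Im (a x (scaleC \<i> y)) + Im (a (scaleC \<i> y) x) = 0"
    using exp[OF iy] a_nonneg assms iy by simp
  have "a x (scaleC \<i> y) = - \<i> * a x y" using assms by (simp add: a_scale_right)
  moreover have "a (scaleC \<i> y) x = \<i> * a y x" using assms by (simp add: a_scale_left)
  ultimately have "- Re (a x y) + Re (a y x) = 0" using 2 by simp
  thus ?thesis by simp
qed

definition bf :: "'a \<Rightarrow> 'a \<Rightarrow> real" where "bf u v = Re (a u v) + inner u v"

lemma bf_rbform: "rbform D bf"
proof unfold_locales
  show "subspace D" by (rule rsub)
  show "bf (x + y) z = bf x z + bf y z" if "x \<in> D" "y \<in> D" "z \<in> D" for x y z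
    using that unfolding bf_def by (simp add: a_add_left inner_add_left)
  show "bf (c *\<^sub>R x) z = c * bf x z" if "x \<in> D" "z \<in> D" for c x z
  proof -
    have "a (c *\<^sub>R x) z = complex_of_real c * a x z"
      using that a_scale_left[of x z "complex_of_real c"] by (simp add: scaleC_real)
    thus ?thesis unfolding bf_def by (simp add: algebra_simps)
  qed
  show "bf x y = bf y x" if "x \<in> D" "y \<in> D" for x y
    unfolding bf_def using a_herm_re[OF that] by (simp add: inner_commute)
  show "0 \<le> bf x x" if "x \<in> D" for x
    unfolding bf_def using a_nonneg[OF that] by simp
qed

interpretation BF: rbform D bf by (rule bf_rbform)

lemma exists_sol: "\<exists>u\<in>D. \<forall>v\<in>D. bf u v = inner f v"
proof (rule BF.riesz[where C = "norm f"])
  show "inner f (x + y) = inner f x + inner f y" for x y by (simp add: inner_add_right)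
  show "inner f (c *\<^sub>R x) = c * inner f x" for c x by simp
  show "\<bar>inner f x\<bar> \<le> norm f * sqrt (bf x x)" if "x \<in> D" for x
  proof -
    have "\<bar>inner f x\<bar> \<le> norm f * norm x" by (rule Cauchy_Schwarz_ineq2)
    also have "norm x \<le> sqrt (bf x x)"
    proof -
      have "norm x = sqrt (inner x x)" by (simp add: norm_eq_sqrt_inner)
      also have "\<dots> \<le> sqrt (bf x x)" unfolding bf_def using a_nonneg[OF that]
        by (intro real_sqrt_le_mono) simp
      finally show ?thesis .
    qed
    hence "norm f * norm x \<le> norm f * sqrt (bf x x)" by (intro mult_left_mono) auto
    finally show ?thesis .
  qed
next
  fix s :: "nat \<Rightarrow> 'a" assume sD: "\<forall>n. s n \<in> D"
    and bc: "\<forall>e>0. \<exists>N. \<forall>m\<ge>N. \<forall>n\<ge>N. bf (s m - s n) (s m - s n) < e"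
  have parts: "Re (a (s m - s n) (s m - s n)) \<le> bf (s m - s n) (s m - s n)
             \<and> (norm (s m - s n))^2 \<le> bf (s m - s n) (s m - s n)" for m n
  proof -
    have "s m - s n \<in> D" using sD BF.Ddiff by blast
    thus ?thesis unfolding bf_def using a_nonneg by (simp add: power2_norm_eq_inner)
  qed
  have "Cauchy s"
  proof (rule CauchyI)
    fix r :: real assume r: "r > 0"
    obtain N where N: "\<forall>m\<ge>N. \<forall>n\<ge>N. bf (s m - s n) (s m - s n) < r^2"
      using bc r by (meson zero_less_power)
    show "\<exists>N. \<forall>m\<ge>N. \<forall>n\<ge>N. norm (s m - s n) < r"
    proof (intro exI allI impI)
      fix m n assume "N \<le> m" "N \<le> n"
      hence "(norm (s m - s n))^2 < r^2" using N parts[of m n] by fastforce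
      thus "norm (s m - s n) < r" using r by (simp add: power_less_imp_less_base)
    qed
  qed
  then obtain u where u: "s \<longlonglongrightarrow> u" using Cauchy_convergent_iff convergent_def by blast
  have acau: "\<forall>e>0. \<exists>N. \<forall>m\<ge>N. \<forall>n\<ge>N. Re (a (s m - s n) (s m - s n)) < e"
  proof (intro allI impI)
    fix e :: real assume "e > 0"
    then obtain N where N: "\<forall>m\<ge>N. \<forall>n\<ge>N. bf (s m - s n) (s m - s n) < e" using bc by blast
    show "\<exists>N. \<forall>m\<ge>N. \<forall>n\<ge>N. Re (a (s m - s n) (s m - s n)) < e"
      using N parts by (meson le_less_trans)
  qed
  from a_closed[OF sD u acau] have uD: "u \<in> D" and alim: "(\<lambda>n. Re (a (s n - u) (s n - u))) \<longlonglongrightarrow> 0"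
    by auto
  have "(\<lambda>n. s n - u) \<longlonglongrightarrow> u - u" by (intro tendsto_intros u)
  hence "(\<lambda>n. (norm (s n - u))^2) \<longlonglongrightarrow> (norm (u - u))^2" by (intro tendsto_intros u)
  hence nlim: "(\<lambda>n. inner (s n - u) (s n - u)) \<longlonglongrightarrow> 0" by (simp add: power2_norm_eq_inner)
  have "(\<lambda>n. bf (s n - u) (s n - u)) \<longlonglongrightarrow> 0 + 0"
    unfolding bf_def by (intro tendsto_add alim nlim)
  thus "\<exists>u\<in>D. (\<lambda>n. bf (s n - u) (s n - u)) \<longlonglongrightarrow> 0" using uD by auto
qed

lemma sol_unique: assumes "u1 \<in> D" "u2 \<in> D" "\<forall>v\<in>D. bf u1 v = inner f v" "\<forall>v\<in>D. bf u2 v = inner f v"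
  shows "u1 = u2"
proof -
  have w: "u1 - u2 \<in> D" using assms BF.Ddiff by blast
  have "bf (u1 - u2) (u1 - u2) = 0" using assms w by (simp add: BF.diff_left)
  hence "inner (u1 - u2) (u1 - u2) \<le> 0" unfolding bf_def using a_nonneg[OF w] by linarith
  hence "u1 - u2 = 0" by (metis inner_eq_zero_iff inner_ge_zero order_antisym)
  thus ?thesis by simp
qed

lemma form_op_iff: "(u, f - u) \<in> form_op D a \<longleftrightarrow> u \<in> D \<and> (\<forall>v\<in>D. bf u v = inner f v)"
proof
  assume "(u, f - u) \<in> form_op D a"
  hence uD: "u \<in> D" and eq: "\<forall>v\<in>D. a u v = cinner (f - u) v" by (auto simp: form_op_def)
  show "u \<in> D \<and> (\<forall>v\<in>D. bf u v = inner f v)"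
  proof (intro conjI ballI uD)
    fix v assume "v \<in> D"
    hence "Re (a u v) = inner (f - u) v" using eq by (simp add: Re_cinner)
    thus "bf u v = inner f v" unfolding bf_def by (simp add: inner_diff_left)
  qed
next
  assume h: "u \<in> D \<and> (\<forall>v\<in>D. bf u v = inner f v)"
  hence uD: "u \<in> D" by simp
  have "a u v = cinner (f - u) v" if vD: "v \<in> D" for v
  proof (rule complex_eqI)
    have "bf u v = inner f v" using h vD by simp
    thus "Re (a u v) = Re (cinner (f - u) v)" unfolding bf_def by (simp add: Re_cinner inner_diff_left)
    have ivD: "scaleC \<i> v \<in> D" using cDscale vD by blast
    have "bf u (scaleC \<i> v) = inner f (scaleC \<i> v)" using h ivD by simp
    moreover have "a u (scaleC \<i> v) = - \<i> * a u v" using uD vD by (simp add: a_scale_right)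
    ultimately have "Im (a u v) = inner (f - u) (scaleC \<i> v)"
      unfolding bf_def by (simp add: inner_diff_left)
    thus "Im (a u v) = Im (cinner (f - u) v)" by (simp add: Im_cinner)
  qed
  thus "(u, f - u) \<in> form_op D a" using uD by (simp add: form_op_def)
qed

lemma resolvent_char: "form_resolvent D a f \<in> D \<and> (\<forall>v\<in>D. bf (form_resolvent D a f) v = inner f v)"
proof -
  obtain u where u: "u \<in> D" "\<forall>v\<in>D. bf u v = inner f v" using exists_sol by blast
  have "form_resolvent D a f = u" unfolding form_resolvent_def
  proof (rule the_equality)
    show "(u, f - u) \<in> form_op D a" using u form_op_iff by blast
    fix w assume "(w, f - w) \<in> form_op D a"
    hence "w \<in> D" "\<forall>v\<in>D. bf w v = inner f v" using form_op_iff by auto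
    thus "w = u" using sol_unique u by blast
  qed
  thus ?thesis using u by simp
qed

end



lemma resolvent_props:
  fixes D :: "'a::complex_hilbert set" and a :: "'a \<Rightarrow> 'a \<Rightarrow> complex"
  assumes F: "closed_dd_nonneg_form D a"
  shows "bounded_linear (form_resolvent D a)"
    and "\<And>x y. inner (form_resolvent D a x) y = inner x (form_resolvent D a y)"
    and "\<And>f. norm (form_resolvent D a f) \<le> norm f"
    and "\<And>f. form_resolvent D a f \<in> D"
    and "\<And>f. Re (a (form_resolvent D a f) (form_resolvent D a f))
               = inner (f - form_resolvent D a f) (form_resolvent D a f)"
proof -
  define R where "R = form_resolvent D a"
  interpret BF: rbform D "bf a" by (rule bf_rbform[OF F])
  have RD: "R f \<in> D" for f using resolvent_char[OF F, of f] unfolding R_def by simp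
  have Req: "\<And>v. v \<in> D \<Longrightarrow> bf a (R f) v = inner f v" for f
    using resolvent_char[OF F, of f] unfolding R_def by simp
  have Req': "Re (a (R f) v) + inner (R f) v = inner f v" if "v \<in> D" for f v
    using Req[OF that, of f] unfolding bf_def[OF F] by simp
  have uniq: "\<And>u. u \<in> D \<Longrightarrow> (\<And>v. v \<in> D \<Longrightarrow> bf a u v = inner f v) \<Longrightarrow> R f = u" for f
    using sol_unique[OF F] RD Req by blast
  have add: "R (f + g) = R f + R g" for f g
  proof (rule uniq)
    show "R f + R g \<in> D" using RD BF.Dadd by blast
    fix v assume "v \<in> D"
    thus "bf a (R f + R g) v = inner (f + g) v"
      using RD by (simp add: BF.add_left Req inner_add_left)
  qed
  have scale: "R (c *\<^sub>R f) = c *\<^sub>R R f" for c f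
  proof (rule uniq)
    show "c *\<^sub>R R f \<in> D" using RD BF.Dscale by blast
    fix v assume "v \<in> D"
    thus "bf a (c *\<^sub>R R f) v = inner (c *\<^sub>R f) v"
      using RD by (simp add: BF.scale_left Req)
  qed
  have form_id: "Re (a (R f) (R f)) = inner (f - R f) (R f)" for f
    using Req'[OF RD, of f f] by (simp add: inner_diff_left)
  have nb: "norm (R f) \<le> norm f" for f
  proof -
    have "Re (a (R f) (R f)) \<ge> 0" using a_nonneg[OF F RD] by simp
    hence "inner (R f) (R f) \<le> inner f (R f)" using form_id[of f] by (simp add: inner_diff_left)
    also have "\<dots> \<le> norm f * norm (R f)" by (rule Cauchy_Schwarz_ineq2[THEN order_trans[OF abs_ge_self]])
    finally have "norm (R f) * norm (R f) \<le> norm f * norm (R f)"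
      by (simp add: power2_norm_eq_inner[symmetric] power2_eq_square)
    thus ?thesis by (cases "norm (R f) = 0") (auto simp: mult_le_cancel_right)
  qed
  show "bounded_linear (form_resolvent D a)"
    unfolding R_def[symmetric]
  proof (rule bounded_linear_intro[where K = 1])
    show "R (x + y) = R x + R y" for x y by (rule add)
    show "R (r *\<^sub>R x) = r *\<^sub>R R x" for r x by (rule scale)
    show "norm (R x) \<le> norm x * 1" for x using nb by simp
  qed
  show "inner (form_resolvent D a x) y = inner x (form_resolvent D a y)" for x y
  proof -
    have "inner (R x) y = inner y (R x)" by (simp add: inner_commute)
    also have "\<dots> = Re (a (R y) (R x)) + inner (R y) (R x)" using Req'[OF RD, of y x] by simp
    also have "\<dots> = Re (a (R x) (R y)) + inner (R x) (R y)"
      using a_herm_re[OF F RD RD, of y x] by (simp add: inner_commute)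
    also have "\<dots> = inner x (R y)" using Req'[OF RD, of x y] by simp
    finally show ?thesis unfolding R_def .
  qed
  show "norm (form_resolvent D a f) \<le> norm f" for f using nb unfolding R_def .
  show "form_resolvent D a f \<in> D" for f using RD unfolding R_def .
  show "Re (a (form_resolvent D a f) (form_resolvent D a f))
               = inner (f - form_resolvent D a f) (form_resolvent D a f)" for f
    using form_id unfolding R_def .
qed



lemma core:
  fixes R1 :: "'b::{real_inner,complete_space} \<Rightarrow> 'b" and R2 :: "'a::{real_inner,complete_space} \<Rightarrow> 'a"
    and Jc :: "'b \<Rightarrow> 'a" and q :: "'b \<Rightarrow> real"
  assumes R1bl: "bounded_linear R1" and R1sym: "\<And>x y. inner (R1 x) y = inner x (R1 y)"
    and R1nb: "\<And>u. norm (R1 u) \<le> norm u"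
    and R2bl: "bounded_linear R2" and R2sym: "\<And>x y. inner (R2 x) y = inner x (R2 y)"
    and Jbl: "bounded_linear Jc"
    and qid: "\<And>u. q (R1 u) = inner (u - R1 u) (R1 u)"
    and est: "\<And>u. (norm (R1 u))^2 \<le> (norm (Jc (R1 u)))^2 + nu * q (R1 u)"
    and comm: "\<And>u. norm (Jc (R1 u) - R2 (Jc u)) \<le> del * norm u"
    and d: "0 < d" "d < 1" and nu: "nu \<ge> 0" and kap: "0 < 1 - nu * (1 / d - 1)" and del: "del \<ge> 0"
    and lam: "\<not> bij (\<lambda>x. R1 x - lam *\<^sub>R x)" "d \<le> lam" "lam \<le> 1"
    and e: "e > 0"
  shows "\<exists>\<mu>. \<not> bij (\<lambda>y. R2 y - \<mu> *\<^sub>R y) \<and> \<bar>lam - \<mu>\<bar> \<le> del / sqrt (1 - nu * (1 / d - 1)) + e"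
proof -
  define \<kappa> where "\<kappa> = 1 - nu * (1 / d - 1)"
  have k0: "\<kappa> > 0" unfolding \<kappa>_def using kap .
  have lam0: "lam > 0" using d lam by simp
  obtain K where K0: "K > 0" and K: "\<And>x. norm (Jc x) \<le> norm x * K"
    using bounded_linear.pos_bounded[OF Jbl] by blast
  define lower where "lower \<eta> = (sqrt (\<kappa> * (lam - \<eta>)^2 - nu * \<eta> / d) - K * \<eta>) / lam" for \<eta>
  define upper where "upper \<eta> = del + K * \<eta>" for \<eta>
  have lim_low: "(lower \<longlongrightarrow> sqrt \<kappa>) (at_right 0)"
  proof -
    have "(lower \<longlongrightarrow> (sqrt (\<kappa> * (lam - 0)^2 - nu * 0 / d) - K * 0) / lam) (at_right 0)"
      unfolding lower_def by (intro tendsto_intros) (use lam0 d in auto)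
    moreover have "(sqrt (\<kappa> * (lam - 0)^2 - nu * 0 / d) - K * 0) / lam = sqrt \<kappa>"
      using lam0 k0 by (simp add: real_sqrt_mult)
    ultimately show ?thesis by simp
  qed
  have lim_up: "(upper \<longlongrightarrow> del) (at_right 0)"
  proof -
    have "(upper \<longlongrightarrow> del + K * 0) (at_right 0)" unfolding upper_def by (intro tendsto_intros)
    thus ?thesis by simp
  qed
  have lim_ratio: "((\<lambda>\<eta>. upper \<eta> / lower \<eta>) \<longlongrightarrow> del / sqrt \<kappa>) (at_right 0)"
    by (rule tendsto_divide[OF lim_up lim_low]) (use k0 in simp)
  have ev1: "\<forall>\<^sub>F \<eta> in at_right 0. 0 < lower \<eta>"
    using order_tendstoD(1)[OF lim_low] k0 by simp
  have ev2: "\<forall>\<^sub>F \<eta> in at_right 0. upper \<eta> / lower \<eta> < del / sqrt \<kappa> + e"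
    using order_tendstoD(2)[OF lim_ratio] e by simp
  have ev3: "\<forall>\<^sub>F \<eta> in at_right 0. \<eta> < lam"
  proof -
    have "((\<lambda>\<eta>. \<eta>) \<longlongrightarrow> 0) (at_right (0::real))" by (rule tendsto_ident_at)
    from order_tendstoD(2)[OF this lam0] show ?thesis .
  qed
  have ev4: "\<forall>\<^sub>F \<eta> in at_right 0. (0::real) < \<eta>" by (rule eventually_at_right_less)
  obtain \<eta> where \<eta>: "0 < lower \<eta>" "upper \<eta> / lower \<eta> < del / sqrt \<kappa> + e" "\<eta> < lam" "0 < \<eta>"
    using eventually_happens'[OF _ eventually_conj[OF ev1 eventually_conj[OF ev2 eventually_conj[OF ev3 ev4]]]]
    by auto
  obtain u where u1: "norm u = 1" and ue: "norm (R1 u - lam *\<^sub>R u) < \<eta>"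
    using approx_eigen[OF R1bl R1sym lam(1) \<eta>(4)] by blast
  define w where "w = R1 u"
  define ee where "ee = w - lam *\<^sub>R u"
  have ee: "norm ee < \<eta>" unfolding ee_def w_def using ue .
  have w1: "norm w \<le> 1" unfolding w_def using R1nb[of u] u1 by simp
  have wlow: "lam - \<eta> \<le> norm w"
  proof -
    have "lam = norm (lam *\<^sub>R u)" using u1 lam0 by simp
    also have "lam *\<^sub>R u = w - ee" unfolding ee_def by simp
    also have "norm (w - ee) \<le> norm w + norm ee" by (rule norm_triangle_ineq4)
    finally show ?thesis using ee by simp
  qed
  have qbound: "q w \<le> (1 / d - 1) * (norm w)^2 + \<eta> / d"
  proof -
    have "q w = inner (u - w) w" unfolding w_def by (rule qid)
    also have "\<dots> = inner u w - (norm w)^2" by (simp add: inner_diff_left power2_norm_eq_inner)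
    also have "inner u w = ((norm w)^2 - inner ee w) / lam"
    proof -
      have "lam * inner u w = inner (lam *\<^sub>R u) w" by simp
      also have "lam *\<^sub>R u = w - ee" unfolding ee_def by simp
      finally have "lam * inner u w = (norm w)^2 - inner ee w"
        by (simp add: inner_diff_left power2_norm_eq_inner)
      thus ?thesis using lam0 by (simp add: field_simps)
    qed
    finally have qw0: "q w = ((norm w)^2 - inner ee w) / lam - (norm w)^2" .
    have s1: "((norm w)^2 - inner ee w) / lam = (1/lam) * (norm w)^2 + (- inner ee w)/lam"
      by (simp add: diff_divide_distrib)
    have s2: "(1 / lam - 1) * (norm w)^2 = (1/lam) * (norm w)^2 - (norm w)^2"
      by (simp add: left_diff_distrib)
    have qw: "q w = (1 / lam - 1) * (norm w)^2 + (- inner ee w) / lam"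
      using qw0 s1 s2 by linarith
    have "(1 / lam - 1) * (norm w)^2 \<le> (1 / d - 1) * (norm w)^2"
      using lam d by (intro mult_right_mono) (auto simp: frac_le)
    moreover have "(- inner ee w) / lam \<le> \<eta> / d"
    proof -
      have "- inner ee w \<le> norm ee * norm w" using Cauchy_Schwarz_ineq2[of ee w] by linarith
      also have "\<dots> \<le> \<eta> * 1" using ee w1 \<eta>(4) by (intro mult_mono) auto
      finally have "- inner ee w \<le> \<eta>" by simp
      hence "(- inner ee w) / lam \<le> \<eta> / lam" using lam0 by (intro divide_right_mono) auto
      also have "\<eta> / lam \<le> \<eta> / d" using \<eta>(4) d lam by (intro divide_left_mono) auto
      finally show ?thesis .
    qed
    ultimately show ?thesis using qw by linarith
  qed
  have Jw: "\<kappa> * (lam - \<eta>)^2 - nu * \<eta> / d \<le> (norm (Jc w))^2"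
  proof -
    have "(norm w)^2 \<le> (norm (Jc w))^2 + nu * q w" unfolding w_def by (rule est)
    also have "nu * q w \<le> nu * ((1 / d - 1) * (norm w)^2 + \<eta> / d)"
      using qbound nu by (intro mult_left_mono) auto
    finally have "\<kappa> * (norm w)^2 - nu * \<eta> / d \<le> (norm (Jc w))^2"
      unfolding \<kappa>_def by (simp add: algebra_simps)
    moreover have "\<kappa> * (lam - \<eta>)^2 \<le> \<kappa> * (norm w)^2"
      using wlow \<eta>(3) k0 by (intro mult_left_mono power_mono) auto
    ultimately show ?thesis by linarith
  qed
  have Jlin: "linear Jc" using Jbl by (rule bounded_linear.linear)
  have Jw2: "norm (Jc w) \<le> lam * norm (Jc u) + K * \<eta>"
  proof -
    have "Jc w = lam *\<^sub>R Jc u + Jc ee" unfolding ee_def using Jlin by (simp add: linear_diff linear_scale)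
    hence "norm (Jc w) \<le> norm (lam *\<^sub>R Jc u) + norm (Jc ee)" using norm_triangle_ineq[of "lam *\<^sub>R Jc u" "Jc ee"] by simp
    also have "norm (Jc ee) \<le> K * \<eta>"
    proof -
      have "norm (Jc ee) \<le> norm ee * K" by (rule K)
      also have "\<dots> \<le> \<eta> * K" using ee K0 by (intro mult_right_mono) auto
      finally show ?thesis by (simp add: mult.commute)
    qed
    finally show ?thesis using lam0 by simp
  qed
  have low_le: "lower \<eta> \<le> norm (Jc u)"
  proof -
    have "sqrt (\<kappa> * (lam - \<eta>)^2 - nu * \<eta> / d) \<le> sqrt ((norm (Jc w))^2)"
      using Jw by (rule real_sqrt_le_mono)
    hence "sqrt (\<kappa> * (lam - \<eta>)^2 - nu * \<eta> / d) \<le> norm (Jc w)" by simp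
    hence "sqrt (\<kappa> * (lam - \<eta>)^2 - nu * \<eta> / d) - K * \<eta> \<le> lam * norm (Jc u)" using Jw2 by linarith
    thus ?thesis unfolding lower_def using lam0 by (simp add: divide_le_eq mult.commute)
  qed
  have Ju0: "Jc u \<noteq> 0" using low_le \<eta>(1) by auto
  have N: "norm (R2 (Jc u) - lam *\<^sub>R Jc u) \<le> upper \<eta>"
  proof -
    have eq: "R2 (Jc u) - lam *\<^sub>R Jc u = (R2 (Jc u) - Jc (R1 u)) + Jc ee"
      unfolding ee_def w_def using Jlin by (simp add: linear_diff linear_scale)
    have "norm (R2 (Jc u) - Jc (R1 u)) \<le> del"
      using comm[of u] u1 by (simp add: norm_minus_commute)
    moreover have "norm (Jc ee) \<le> K * \<eta>"
    proof -
      have "norm (Jc ee) \<le> norm ee * K" by (rule K)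
      also have "\<dots> \<le> \<eta> * K" using ee K0 by (intro mult_right_mono) auto
      finally show ?thesis by (simp add: mult.commute)
    qed
    ultimately show ?thesis unfolding eq upper_def using norm_triangle_ineq[of "R2 (Jc u) - Jc (R1 u)" "Jc ee"]
      by linarith
  qed
  obtain \<mu> where \<mu>: "\<not> bij (\<lambda>y. R2 y - \<mu> *\<^sub>R y)"
      and d\<mu>: "\<bar>lam - \<mu>\<bar> \<le> norm (R2 (Jc u) - lam *\<^sub>R Jc u) / norm (Jc u)"
    using spec_near[OF R2bl R2sym Ju0] by blast
  have "norm (R2 (Jc u) - lam *\<^sub>R Jc u) / norm (Jc u) \<le> upper \<eta> / norm (Jc u)"
    using N Ju0 by (simp add: divide_right_mono)
  also have "\<dots> \<le> upper \<eta> / lower \<eta>"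
  proof -
    have "0 < norm (Jc u) * lower \<eta>" using low_le \<eta>(1) by (intro mult_pos_pos) auto
    thus ?thesis using low_le \<eta>(1) del K0 \<eta>(4) unfolding upper_def by (intro divide_left_mono) auto
  qed
  also have "\<dots> < del / sqrt \<kappa> + e" by (rule \<eta>(2))
  finally show ?thesis using \<mu> d\<mu> unfolding \<kappa>_def by force
qed



lemma half:
  fixes Da :: "'a::complex_hilbert set" and a :: "'a \<Rightarrow> 'a \<Rightarrow> complex"
    and De :: "'b::complex_hilbert set" and ae :: "'b \<Rightarrow> 'b \<Rightarrow> complex"
    and Jc :: "'b \<Rightarrow> 'a" and del nu d :: real
  assumes form_a: "closed_dd_nonneg_form Da a"
    and form_ae: "closed_dd_nonneg_form De ae"
    and Jbl: "bounded_linear Jc"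
    and del: "del \<ge> 0" and nu: "nu \<ge> 0"
    and est2: "onorm (\<lambda>u. Jc (form_resolvent De ae u) - form_resolvent Da a (Jc u)) \<le> del"
    and est4: "\<forall>u\<in>De. (norm u)\<^sup>2 \<le> (norm (Jc u))\<^sup>2 + nu * Re (ae u u)"
    and d: "0 < d" "d < 1"
    and nu_small: "nu < d / (1 - d)"
  shows "dist_out (real_spectrum (form_resolvent De ae) \<inter> {d..1})
                  (real_spectrum (form_resolvent Da a))
           \<le> ennreal (del / sqrt (1 - nu * (1 / d - 1)))"
proof -
  define R1 where "R1 = form_resolvent De ae"
  define R2 where "R2 = form_resolvent Da a"
  note P1 = resolvent_props[OF form_ae, folded R1_def]
  note P2 = resolvent_props[OF form_a, folded R2_def]
  have kap: "0 < 1 - nu * (1 / d - 1)"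
  proof -
    have pos: "1 / d - 1 > 0" using d by simp
    have e1: "(d / (1 - d)) * (1 / d - 1) = 1" using d by (simp add: field_simps)
    have "nu * (1 / d - 1) < (d / (1 - d)) * (1 / d - 1)"
      using nu_small pos by (intro mult_strict_right_mono) auto
    thus ?thesis using e1 by linarith
  qed
  define B where "B = del / sqrt (1 - nu * (1 / d - 1))"
  have B0: "B \<ge> 0" unfolding B_def using del kap by simp
  have Cbl: "bounded_linear (\<lambda>u. Jc (R1 u) - R2 (Jc u))"
    by (intro bounded_linear_sub bounded_linear_compose[OF Jbl P1(1)] bounded_linear_compose[OF P2(1) Jbl])
  have comm: "norm (Jc (R1 u) - R2 (Jc u)) \<le> del * norm u" for u
  proof -
    have "norm (Jc (R1 u) - R2 (Jc u)) \<le> onorm (\<lambda>u. Jc (R1 u) - R2 (Jc u)) * norm u"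
      using onorm[OF Cbl] by simp
    also have "\<dots> \<le> del * norm u" using est2 unfolding R1_def R2_def
      by (intro mult_right_mono) auto
    finally show ?thesis .
  qed
  have key: "\<exists>\<mu>\<in>real_spectrum R2. \<bar>lam - \<mu>\<bar> \<le> B + e"
    if lamS: "lam \<in> real_spectrum R1" and lamI: "d \<le> lam" "lam \<le> 1" and e: "e > 0" for lam e
  proof -
    have nb: "\<not> bij (\<lambda>x. R1 x - lam *\<^sub>R x)"
      using lamS by (simp add: real_spectrum_def cspectrum_def scaleC_of_real)
    obtain \<mu> where \<mu>: "\<not> bij (\<lambda>y. R2 y - \<mu> *\<^sub>R y)" and dm: "\<bar>lam - \<mu>\<bar> \<le> B + e"
      using core[where q = "\<lambda>u. Re (ae u u)", OF P1(1) P1(2) P1(3) P2(1) P2(2) Jbl P1(5) _ comm d nu kap del nb lamI e]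
        est4 P1(4) unfolding B_def by blast
    have "\<mu> \<in> real_spectrum R2" using \<mu> by (simp add: real_spectrum_def cspectrum_def scaleC_of_real)
    thus ?thesis using dm by blast
  qed
  show ?thesis
    unfolding dist_out_def R1_def[symmetric] R2_def[symmetric] B_def[symmetric]
  proof (rule SUP_least)
    fix lam assume "lam \<in> real_spectrum R1 \<inter> {d..1}"
    hence lamS: "lam \<in> real_spectrum R1" and lamI: "d \<le> lam" "lam \<le> 1" by auto
    show "(INF y\<in>real_spectrum R2. ennreal \<bar>lam - y\<bar>) \<le> ennreal B"
    proof (rule ennreal_le_epsilon)
      fix e :: real assume "0 < e"
      then obtain \<mu> where "\<mu> \<in> real_spectrum R2" "\<bar>lam - \<mu>\<bar> \<le> B + e" using key lamS lamI by blast
      hence "(INF y\<in>real_spectrum R2. ennreal \<bar>lam - y\<bar>) \<le> ennreal (B + e)"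
        by (intro INF_lower2[of \<mu>]) (auto intro: ennreal_leI)
      also have "\<dots> = ennreal B + ennreal e" using B0 \<open>0 < e\<close> by (simp add: ennreal_plus)
      finally show "(INF y\<in>real_spectrum R2. ennreal \<bar>lam - y\<bar>) \<le> ennreal B + ennreal e" .
    qed
  qed
qed

theorem theorem5:
  fixes Da :: "'a::complex_hilbert set" and a :: "'a \<Rightarrow> 'a \<Rightarrow> complex"
    and De :: "'b::complex_hilbert set" and ae :: "'b \<Rightarrow> 'b \<Rightarrow> complex"
    and J :: "'a \<Rightarrow> 'b" and Jc :: "'b \<Rightarrow> 'a"
    and \<delta> \<delta>c \<nu> \<nu>c d :: real
  assumes sepH: "separable_space TYPE('a)"
    and sepHe: "separable_space TYPE('b)"
    and form_a: "closed_dd_nonneg_form Da a"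
    and form_ae: "closed_dd_nonneg_form De ae"
    and J_bl: "cbounded_linear J"
    and Jc_bl: "cbounded_linear Jc"
    and nonneg: "\<delta> \<ge> 0" "\<delta>c \<ge> 0" "\<nu> \<ge> 0" "\<nu>c \<ge> 0"
    and est1: "onorm (\<lambda>f. form_resolvent De ae (J f) - J (form_resolvent Da a f)) \<le> \<delta>"
    and est2: "onorm (\<lambda>u. Jc (form_resolvent De ae u) - form_resolvent Da a (Jc u)) \<le> \<delta>c"
    and est3: "\<forall>f\<in>Da. (norm f)\<^sup>2 \<le> (norm (J f))\<^sup>2 + \<nu> * Re (a f f)"
    and est4: "\<forall>u\<in>De. (norm u)\<^sup>2 \<le> (norm (Jc u))\<^sup>2 + \<nu>c * Re (ae u u)"
    and d: "0 < d" "d < 1"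
    and \<nu>_small: "\<nu> < d / (1 - d)" "\<nu>c < d / (1 - d)"
  shows "dist_out (real_spectrum (form_resolvent De ae) \<inter> {d..1})
                  (real_spectrum (form_resolvent Da a))
           \<le> ennreal (\<delta>c / sqrt (1 - \<nu>c * (1 / d - 1)))
       \<and> dist_out (real_spectrum (form_resolvent Da a) \<inter> {d..1})
                  (real_spectrum (form_resolvent De ae))
           \<le> ennreal (\<delta> / sqrt (1 - \<nu> * (1 / d - 1)))"
proof
  have Jcb: "bounded_linear Jc" using Jc_bl by (simp add: cbounded_linear_def)
  have Jb: "bounded_linear J" using J_bl by (simp add: cbounded_linear_def)
  show "dist_out (real_spectrum (form_resolvent De ae) \<inter> {d..1})
                  (real_spectrum (form_resolvent Da a))
           \<le> ennreal (\<delta>c / sqrt (1 - \<nu>c * (1 / d - 1)))"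
    by (rule half[OF form_a form_ae Jcb nonneg(2) nonneg(4) est2 est4 d \<nu>_small(2)])
  have est1': "onorm (\<lambda>f. J (form_resolvent Da a f) - form_resolvent De ae (J f)) \<le> \<delta>"
  proof -
    define g where "g = (\<lambda>f. form_resolvent De ae (J f) - J (form_resolvent Da a f))"
    have eq: "(\<lambda>f. J (form_resolvent Da a f) - form_resolvent De ae (J f)) = (\<lambda>x. - g x)"
      unfolding g_def by auto
    show ?thesis unfolding eq onorm_neg using est1 unfolding g_def .
  qed
  show "dist_out (real_spectrum (form_resolvent Da a) \<inter> {d..1})
                  (real_spectrum (form_resolvent De ae))
           \<le> ennreal (\<delta> / sqrt (1 - \<nu> * (1 / d - 1)))"
    by (rule half[OF form_ae form_a Jb nonneg(1) nonneg(3) est1' est3 d \<nu>_small(1)])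
qed

end
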